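(* For all $N\ge1$ and $1\le k\le N$, $E[X_{k,N}]=E[Y_{k,N}]=\prod_{j=k+1}^N\big(1-\tfrac rj\big)$.
   Context: Fix $r\in(0,1)$. Multitype Yule process: at time $0$ a single individual of type $1$ is born; no deaths; each individual independently gives birth at rate $1$; a newborn has, independently, its parent's type with probability $1-r$ and otherwise a brand-new type. Individuals are numbered in order of birth (the initial one is the 1st); if the $k$-th individual born has a type different from its parent, that type is called type $k$. $T_N$ is the time the population reaches size $N$; $X_{k,N}$ is the fraction of individuals at time $T_N$ with type in $\{1,\dots,k\}$; $V_{k,N}$ is the fraction, among those individuals at time $T_N$ with type in $\{1,\dots,k\}$, that have type $k$. $W_k=\lim_{N\to\infty}V_{k,N}$ (exists a.s.); the $W_k$ are independent, $W_1=1$, and for $k\ge2$, $P(W_k>0)=r$ and given $W_k>0$, $W_k\sim\mathrm{Beta}(1,k-1)$. $Y_{N,N}=1$ and $Y_{k,N}=\prod_{j=k+1}^N(1-W_j)$ for $1\le k\le N-1$. *)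

theory Defs
  imports "HOL-Probability.Probability"
begin

text \<open>Embedded jump chain of the multitype Yule process. A state is the list of
types of the individuals, in order of birth (entry i is the type of the (i+1)-th
individual). Types are labelled by the birth index of the founding individual.
When the population has size n, the next birth comes from a uniformly chosen
individual (all individuals give birth at rate 1); the newborn (individual n+1)
keeps the parent's type with probability 1-r and otherwise gets the new type n+1.\<close>

definition yule_step :: "real \<Rightarrow> nat list \<Rightarrow> nat list pmf" where
  "yule_step r ts =
     pmf_of_set {0..<length ts} \<bind> (\<lambda>i.
     bernoulli_pmf r \<bind> (\<lambda>new.
     return_pmf (ts @ [if new then length ts + 1 else ts ! i])))"

text \<open>State after n births, i.e. at time T_(n+1) (population size n+1).\<close>
fun yule_chain :: "real \<Rightarrow> nat \<Rightarrow> nat list pmf" where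
  "yule_chain r 0 = return_pmf [1]"
| "yule_chain r (Suc n) = yule_chain r n \<bind> yule_step r"

text \<open>Population at time T_N (N \<ge> 1).\<close>
definition yule_at :: "real \<Rightarrow> nat \<Rightarrow> nat list pmf" where
  "yule_at r N = yule_chain r (N - 1)"

definition Xfrac :: "nat \<Rightarrow> nat list \<Rightarrow> real" where
  "Xfrac k ts = real (length (filter (\<lambda>t. 1 \<le> t \<and> t \<le> k) ts)) / real (length ts)"

text \<open>Beta(1, j-1) distribution on [0,1] (density (j-1)(1-x)^(j-2)), j \<ge> 2.\<close>
definition beta1 :: "nat \<Rightarrow> real measure" where
  "beta1 j = density lborel
     (\<lambda>x. ennreal (indicator {0..1} x * (real j - 1) * (1 - x) ^ (j - 2)))"

definition W_law :: "real \<Rightarrow> nat \<Rightarrow> real measure" where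
  "W_law r j = distr (measure_pmf (bernoulli_pmf r) \<Otimes>\<^sub>M beta1 j) borel
                  (\<lambda>(b, u). if b then u else 0)"

definition W_joint :: "real \<Rightarrow> nat \<Rightarrow> nat \<Rightarrow> (nat \<Rightarrow> real) measure" where
  "W_joint r k N = (\<Pi>\<^sub>M j\<in>{k+1..N}. W_law r j)"

definition Yprod :: "nat \<Rightarrow> nat \<Rightarrow> (nat \<Rightarrow> real) \<Rightarrow> real" where
  "Yprod k N w = (\<Prod>j\<in>{k+1..N}. 1 - w j)"

end

theory Submission imports Defs begin

lemma Xfrac_bound: "\<bar>Xfrac k ts\<bar> \<le> 1"
  unfolding Xfrac_def
  by (cases "length ts = 0") (auto simp: divide_le_eq_1 length_filter_le)

lemma expectation_bind_pmf_bounded: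
  fixes f :: "'b \<Rightarrow> real"
  assumes "\<And>x. \<bar>f x\<bar> \<le> B"
  shows "measure_pmf.expectation (p \<bind> q) f = measure_pmf.expectation p (\<lambda>x. measure_pmf.expectation (q x) f)"
  unfolding measure_pmf_bind
  apply (rule integral_bind[where K="count_space UNIV" and B=B and B'=1])
  using assms measurable_measure_pmf[of q]
  by (auto simp: prob_space.emeasure_space_1 prob_space_measure_pmf measure_pmf.finite_measure_axioms)

lemma yule_chain_support:
  "ts \<in> set_pmf (yule_chain r n) \<Longrightarrow> length ts = Suc n \<and> (\<forall>t\<in>set ts. 1 \<le> t \<and> t \<le> length ts)"
proof (induction n arbitrary: ts)
  case 0 then show ?case by simp
next
  case (Suc n)
  then obtain ts0 i b where ts0: "ts0 \<in> set_pmf (yule_chain r n)" and i: "i < length ts0"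
    and ts: "ts = ts0 @ [if b then length ts0 + 1 else ts0 ! i]"
    by (auto simp: yule_step_def set_bind_pmf set_pmf_of_set)
  from Suc.IH[OF ts0] have ih: "length ts0 = Suc n" "\<forall>t\<in>set ts0. 1 \<le> t \<and> t \<le> length ts0" by auto
  have "ts0 ! i \<in> set ts0" using i by simp
  then show ?case using ih ts by force
qed


definition cnt :: "nat \<Rightarrow> nat list \<Rightarrow> nat" where
  "cnt k ts = length (filter (\<lambda>t. 1 \<le> t \<and> t \<le> k) ts)"

lemma cnt_sum: "real (cnt k ts) = (\<Sum>i<length ts. if 1 \<le> ts ! i \<and> ts ! i \<le> k then 1 else 0)"
proof (induction ts rule: rev_induct)
  case Nil then show ?case by (simp add: cnt_def)
next
  case (snoc x xs)
  have "(\<Sum>i<length (xs @ [x]). if 1 \<le> (xs @ [x]) ! i \<and> (xs @ [x]) ! i \<le> k then 1 else 0)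
      = (\<Sum>i<length xs. if 1 \<le> xs ! i \<and> xs ! i \<le> k then 1 else (0::real))
        + (if 1 \<le> x \<and> x \<le> k then 1 else 0)"
    by (simp add: nth_append)
  then show ?case using snoc by (simp add: cnt_def)
qed

lemma Xfrac_snoc: "Xfrac k (ts @ [x]) = (real (cnt k ts) + (if 1 \<le> x \<and> x \<le> k then 1 else 0)) / (real (length ts) + 1)"
  by (simp add: Xfrac_def cnt_def)

lemma step_alg: "(L::real) > 0 \<Longrightarrow> (r * ((C + 0) / (L + 1)) + (1 - r) * ((C + c) / (L + 1))) / L = (C + (1 - r) * c) / (L * (L + 1))"
proof -
  assume "L > 0" then have "L + 1 \<noteq> 0" "L \<noteq> 0" by auto
  then show ?thesis by (simp add: divide_inverse inverse_mult_distrib del: distrib_right distrib_left) (simp add: algebra_simps)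
qed

lemma step_expect:
  assumes r: "0 \<le> r" "r \<le> 1" and L: "length ts > 0" "k \<le> length ts"
  shows "measure_pmf.expectation (yule_step r ts) (Xfrac k) = Xfrac k ts * (1 - r / (real (length ts) + 1))"
proof -
  define L where "L = length ts"
  have Lpos: "real L > 0" using L L_def by simp
  have "measure_pmf.expectation (yule_step r ts) (Xfrac k)
      = (\<Sum>i\<in>{0..<L}. measure_pmf.expectation (bernoulli_pmf r \<bind> (\<lambda>new.
           return_pmf (ts @ [if new then L + 1 else ts ! i]))) (Xfrac k) /\<^sub>R real (card {0..<L}))"
    unfolding yule_step_def L_def
    by (rule pmf_expectation_bind_pmf_of_set) (use L in auto)
  also have "\<dots> = (\<Sum>i<L. (r * Xfrac k (ts @ [L+1]) + (1 - r) * Xfrac k (ts @ [ts ! i])) / real L)"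
    using r by (auto simp: lessThan_atLeast0 map_pmf_def[symmetric] divide_inverse_commute mult.commute)
  also have "\<dots> = (\<Sum>i<L. (real (cnt k ts) + (1 - r) * (if 1 \<le> ts ! i \<and> ts ! i \<le> k then 1 else 0)) / (real L * (real L + 1)))"
  proof (rule sum.cong[OF refl])
    fix i assume "i \<in> {..<L}"
    have "\<not> (1 \<le> L + 1 \<and> L + 1 \<le> k)" using L L_def by simp
    then show "(r * Xfrac k (ts @ [L+1]) + (1 - r) * Xfrac k (ts @ [ts ! i])) / real L
        = (real (cnt k ts) + (1 - r) * (if 1 \<le> ts ! i \<and> ts ! i \<le> k then 1 else 0)) / (real L * (real L + 1))"
      unfolding Xfrac_snoc L_def[symmetric] using step_alg[OF Lpos, of r "real (cnt k ts)"] by simp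
  qed
  also have "\<dots> = (real L * real (cnt k ts) + (1 - r) * real (cnt k ts)) / (real L * (real L + 1))"
    by (simp add: sum_divide_distrib[symmetric] sum.distrib sum_distrib_left[symmetric]
          cnt_sum[of k ts] L_def)
  also have "\<dots> = Xfrac k ts * (1 - r / (real L + 1))"
    using Lpos unfolding Xfrac_def cnt_def[symmetric] L_def[symmetric]
    by (simp add: field_simps)
  finally show ?thesis by (simp add: L_def)
qed


lemma chain_expect:
  assumes r: "0 \<le> r" "r \<le> 1" and k: "1 \<le> k" "k \<le> Suc n"
  shows "measure_pmf.expectation (yule_chain r n) (Xfrac k) = (\<Prod>j\<in>{k+1..Suc n}. 1 - r / real j)"
  using k
proof (induction n)
  case 0
  then have "k = 1" by simp
  then show ?case by (simp add: Xfrac_def)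
next
  case (Suc n)
  show ?case
  proof (cases "k \<le> Suc n")
    case True
    have "measure_pmf.expectation (yule_chain r (Suc n)) (Xfrac k)
        = measure_pmf.expectation (yule_chain r n) (\<lambda>ts. measure_pmf.expectation (yule_step r ts) (Xfrac k))"
      by (simp add: expectation_bind_pmf_bounded[OF Xfrac_bound])
    also have "\<dots> = measure_pmf.expectation (yule_chain r n) (\<lambda>ts. Xfrac k ts * (1 - r / (real (Suc n) + 1)))"
    proof (rule integral_cong_AE)
      show "AE ts in measure_pmf (yule_chain r n). measure_pmf.expectation (yule_step r ts) (Xfrac k) = Xfrac k ts * (1 - r / (real (Suc n) + 1))"
      proof (rule AE_pmfI)
        fix ts assume "ts \<in> set_pmf (yule_chain r n)"
        from yule_chain_support[OF this] have "length ts = Suc n" by simp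
        then show "measure_pmf.expectation (yule_step r ts) (Xfrac k) = Xfrac k ts * (1 - r / (real (Suc n) + 1))"
          using step_expect[OF r, of ts k] True by simp
      qed
    qed simp_all
    also have "\<dots> = (\<Prod>j\<in>{k+1..Suc n}. 1 - r / real j) * (1 - r / real (Suc (Suc n)))"
      using Suc.IH[OF Suc.prems(1) True] by simp
    also have "\<dots> = (\<Prod>j\<in>{k+1..Suc (Suc n)}. 1 - r / real j)"
      using True by (simp add: prod.nat_ivl_Suc')
    finally show ?thesis .
  next
    case False
    then have kk: "k = Suc (Suc n)" using Suc.prems by simp
    have "measure_pmf.expectation (yule_chain r (Suc n)) (Xfrac k) = measure_pmf.expectation (yule_chain r (Suc n)) (\<lambda>_. 1)"
    proof (rule integral_cong_AE)
      show "AE ts in measure_pmf (yule_chain r (Suc n)). Xfrac k ts = 1"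
      proof (rule AE_pmfI)
        fix ts assume "ts \<in> set_pmf (yule_chain r (Suc n))"
        from yule_chain_support[OF this] kk have "length ts = k" "\<forall>t\<in>set ts. 1 \<le> t \<and> t \<le> k" by auto
        then show "Xfrac k ts = 1" unfolding Xfrac_def
          using kk by (subst filter_True) auto
      qed
    qed simp_all
    then show ?thesis using kk by simp
  qed
qed

lemma part1:
  assumes "0 \<le> r" "r \<le> 1" "1 \<le> N" "1 \<le> k" "k \<le> N"
  shows "measure_pmf.expectation (yule_at r N) (Xfrac k) = (\<Prod>j\<in>{k+1..N}. 1 - r / real j)"
  using chain_expect[of r k "N - 1"] assms by (simp add: yule_at_def)


lemma beta_int:
  "(\<integral>\<^sup>+ x. ennreal (indicator {0..1::real} x * (1 - x) ^ m) \<partial>lborel) = ennreal (1 / (real m + 1))"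
proof -
  have "((\<lambda>x::real. (1 - x) ^ m) has_integral ((\<lambda>x. - ((1 - x) ^ (Suc m)) / (real m + 1)) 1 - (\<lambda>x. - ((1 - x) ^ (Suc m)) / (real m + 1)) 0)) {0..1}"
  proof (rule fundamental_theorem_of_calculus)
    fix x :: real
    show "((\<lambda>x. - ((1 - x) ^ Suc m) / (real m + 1)) has_vector_derivative (1 - x) ^ m) (at x within {0..1})"
    proof -
      have "((\<lambda>x. - ((1 - x) ^ Suc m) / (real m + 1)) has_real_derivative (- (real (Suc m) * (1 - x) ^ m * (- 1)) / (real m + 1))) (at x within {0..1})"
        apply (auto intro!: derivative_eq_intros)
        apply (cases m)
         apply (auto simp: field_simps)
        done
      moreover have "(- (real (Suc m) * (1 - x) ^ m * (- 1)) / (real m + 1)) = (1 - x) ^ m"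
        by (simp add: field_simps)
      ultimately show "((\<lambda>x. - ((1 - x) ^ Suc m) / (real m + 1)) has_vector_derivative (1 - x) ^ m) (at x within {0..1})"
        by (simp add: has_real_derivative_iff_has_vector_derivative)
    qed
  qed simp
  then have "((\<lambda>x::real. (1 - x) ^ m) has_integral (1 / (real m + 1))) {0..1}" by simp
  then show ?thesis
    by (subst nn_integral_has_integral_lebesgue[symmetric]) auto
qed


lemma beta1_nn:
  assumes j: "2 \<le> j" and g[measurable]: "g \<in> borel_measurable borel"
    and pt: "\<And>x. ennreal (indicator {0..1} x * (real j - 1) * (1 - x) ^ (j - 2)) * g x = ennreal (real j - 1) * ennreal (indicator {0..1::real} x * (1 - x) ^ m)"
  shows "(\<integral>\<^sup>+ x. g x \<partial>beta1 j) = ennreal ((real j - 1) / (real m + 1))"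
proof -
  have "(\<integral>\<^sup>+ x. g x \<partial>beta1 j) = (\<integral>\<^sup>+ x. ennreal (indicator {0..1} x * (real j - 1) * (1 - x) ^ (j - 2)) * g x \<partial>lborel)"
    unfolding beta1_def by (subst nn_integral_density) auto
  also have "\<dots> = (\<integral>\<^sup>+ x. ennreal (real j - 1) * ennreal (indicator {0..1::real} x * (1 - x) ^ m) \<partial>lborel)"
    by (simp add: pt)
  also have "\<dots> = ennreal (real j - 1) * ennreal (1 / (real m + 1))"
    by (subst nn_integral_cmult) (auto simp: beta_int)
  also have "\<dots> = ennreal ((real j - 1) / (real m + 1))"
    using j by (simp add: ennreal_mult[symmetric])
  finally show ?thesis .
qed

lemma beta1_space:
  assumes j: "2 \<le> j"
  shows "emeasure (beta1 j) (space (beta1 j)) = 1"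
proof -
  have "emeasure (beta1 j) (space (beta1 j)) = (\<integral>\<^sup>+ x. 1 \<partial>beta1 j)"
    by simp
  also have "\<dots> = ennreal ((real j - 1) / (real (j - 2) + 1))"
  proof (rule beta1_nn[OF j])
    fix x :: real
    show "ennreal (indicator {0..1} x * (real j - 1) * (1 - x) ^ (j - 2)) * 1 = ennreal (real j - 1) * ennreal (indicator {0..1} x * (1 - x) ^ (j - 2))"
      using j by (cases "x \<in> {0..1}") (auto simp: ennreal_mult[symmetric] mult_ac)
  qed simp
  also have "\<dots> = 1" using j by (simp add: of_nat_diff)
  finally show ?thesis .
qed

lemma beta1_1mx:
  assumes j: "2 \<le> j"
  shows "(\<integral>\<^sup>+ x. ennreal (1 - x) \<partial>beta1 j) = ennreal ((real j - 1) / real j)"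
proof -
  have "(\<integral>\<^sup>+ x. ennreal (1 - x) \<partial>beta1 j) = ennreal ((real j - 1) / (real (j - 1) + 1))"
  proof (rule beta1_nn[OF j])
    fix x :: real
    show "ennreal (indicator {0..1} x * (real j - 1) * (1 - x) ^ (j - 2)) * ennreal (1 - x) = ennreal (real j - 1) * ennreal (indicator {0..1} x * (1 - x) ^ (j - 1))"
    proof (cases "x \<in> {0..1}")
      case True
      have "(1 - x) ^ (j - 2) * (1 - x) = (1 - x) ^ (j - 1)"
        using j by (metis Suc_diff_Suc Suc_1 diff_Suc_1 less_le_trans lessI power_Suc2 Suc_le_lessD)
      then show ?thesis using True j
        by (auto simp: ennreal_mult'[symmetric] ennreal_mult[symmetric] mult_ac)
    qed auto
  qed simp
  also have "\<dots> = ennreal ((real j - 1) / real j)" using j by (simp add: of_nat_diff)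
  finally show ?thesis .
qed

lemma beta1_xm1:
  assumes j: "2 \<le> j"
  shows "(\<integral>\<^sup>+ x. ennreal (x - 1) \<partial>beta1 j) = 0"
proof -
  have "(\<integral>\<^sup>+ x. ennreal (x - 1) \<partial>beta1 j) = (\<integral>\<^sup>+ x. ennreal (indicator {0..1} x * (real j - 1) * (1 - x) ^ (j - 2)) * ennreal (x - 1) \<partial>lborel)"
    unfolding beta1_def by (subst nn_integral_density) auto
  also have "\<dots> = (\<integral>\<^sup>+ (x::real). 0 \<partial>lborel)"
  proof (rule nn_integral_cong)
    fix x :: real assume "x \<in> space lborel"
    show "ennreal (indicator {0..1} x * (real j - 1) * (1 - x) ^ (j - 2)) * ennreal (x - 1) = 0"
    proof (cases "x \<in> {0..1}")
      case True
      then have "ennreal (x - 1) = 0" by (simp add: ennreal_eq_0_iff)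
      then show ?thesis by simp
    qed simp
  qed
  finally show ?thesis by simp
qed


lemma sets_beta1[simp, measurable_cong]: "sets (beta1 j) = sets borel"
  by (simp add: beta1_def)

lemma W_meas: "(\<lambda>(b, u). if b then u else 0::real) \<in> measurable (measure_pmf (bernoulli_pmf r) \<Otimes>\<^sub>M beta1 j) borel"
  by measurable

lemma W_nn:
  assumes j: "2 \<le> j" and r: "0 \<le> r" "r \<le> 1" and g[measurable]: "g \<in> borel_measurable borel"
  shows "(\<integral>\<^sup>+ w. g w \<partial>W_law r j) = (\<integral>\<^sup>+ u. g u \<partial>beta1 j) * ennreal r + g 0 * ennreal (1 - r)"
proof -
  interpret beta: prob_space "beta1 j" by (rule prob_spaceI) (rule beta1_space[OF j])
  have "(\<integral>\<^sup>+ w. g w \<partial>W_law r j) = (\<integral>\<^sup>+ p. g ((\<lambda>(b, u). if b then u else 0) p) \<partial>(measure_pmf (bernoulli_pmf r) \<Otimes>\<^sub>M beta1 j))"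
    unfolding W_law_def by (rule nn_integral_distr[OF W_meas]) simp
  also have "\<dots> = (\<integral>\<^sup>+ b. \<integral>\<^sup>+ u. g (if b then u else 0) \<partial>beta1 j \<partial>measure_pmf (bernoulli_pmf r))"
    by (subst beta.nn_integral_fst[symmetric]) (auto intro: measurable_compose[OF W_meas g])
  also have "\<dots> = (\<integral>\<^sup>+ u. g u \<partial>beta1 j) * ennreal r + (\<integral>\<^sup>+ u. g 0 \<partial>beta1 j) * ennreal (1 - r)"
    using r by simp
  also have "(\<integral>\<^sup>+ u. g 0 \<partial>beta1 j) = g 0"
    by (simp add: beta.emeasure_space_1)
  finally show ?thesis .
qed


lemma sets_W_law[simp, measurable_cong]: "sets (W_law r j) = sets borel"
  by (simp add: W_law_def)

lemma W_prob:
  assumes j: "2 \<le> j" and r: "0 \<le> r" "r \<le> 1"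
  shows "prob_space (W_law r j)"
proof (rule prob_spaceI)
  interpret beta: prob_space "beta1 j" by (rule prob_spaceI) (rule beta1_space[OF j])
  have "emeasure (W_law r j) (space (W_law r j)) = (\<integral>\<^sup>+ w. 1 \<partial>W_law r j)" by simp
  also have "\<dots> = 1" using W_nn[OF j r, of "\<lambda>_. 1"] r
    by (simp add: beta.emeasure_space_1 ennreal_plus[symmetric] del: ennreal_plus)
  finally show "emeasure (W_law r j) (space (W_law r j)) = 1" .
qed

lemma W_AE:
  assumes j: "2 \<le> j" and r: "0 \<le> r" "r \<le> 1"
  shows "AE w in W_law r j. 0 \<le> 1 - w"
proof -
  have "(\<integral>\<^sup>+ w. ennreal (w - 1) \<partial>W_law r j) = 0"
    using W_nn[OF j r, of "\<lambda>w. ennreal (w - 1)"] beta1_xm1[OF j] by (simp add: ennreal_neg)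
  then have "AE w in W_law r j. ennreal (w - 1) = 0"
    by (subst nn_integral_0_iff_AE[symmetric]) auto
  then show ?thesis by eventually_elim (simp add: ennreal_eq_0_iff)
qed

lemma W_nn_1mw:
  assumes j: "2 \<le> j" and r: "0 \<le> r" "r \<le> 1"
  shows "(\<integral>\<^sup>+ w. ennreal (1 - w) \<partial>W_law r j) = ennreal (1 - r / real j)"
proof -
  have "(\<integral>\<^sup>+ w. ennreal (1 - w) \<partial>W_law r j) = ennreal ((real j - 1) / real j) * ennreal r + ennreal (1 - r)"
    using W_nn[OF j r, of "\<lambda>w. ennreal (1 - w)"] beta1_1mx[OF j] by simp
  also have "\<dots> = ennreal ((real j - 1) / real j * r + (1 - r))"
    using j r by (simp add: ennreal_mult[symmetric] ennreal_plus[symmetric] del: ennreal_plus)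
  also have "(real j - 1) / real j * r + (1 - r) = 1 - r / real j"
    using j by (simp add: field_simps)
  finally show ?thesis .
qed

lemma W_integrable:
  assumes j: "2 \<le> j" and r: "0 \<le> r" "r \<le> 1"
  shows "integrable (W_law r j) (\<lambda>w. 1 - w)"
  by (rule integrableI_nonneg) (use W_AE[OF j r] W_nn_1mw[OF j r] in auto)

lemma W_integral:
  assumes j: "2 \<le> j" and r: "0 \<le> r" "r \<le> 1"
  shows "(\<integral>w. 1 - w \<partial>W_law r j) = 1 - r / real j"
proof -
  have "(\<integral>w. 1 - w \<partial>W_law r j) = enn2real (\<integral>\<^sup>+ w. ennreal (1 - w) \<partial>W_law r j)"
    by (rule integral_eq_nn_integral) (use W_AE[OF j r] in auto)
  also have "\<dots> = 1 - r / real j"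
    using W_nn_1mw[OF j r] j r by (simp add: field_simps)
  finally show ?thesis .
qed


lemma part2:
  assumes r: "0 \<le> r" "r \<le> 1" and k: "1 \<le> k"
  shows "(\<integral>w. Yprod k N w \<partial>(W_joint r k N)) = (\<Prod>j\<in>{k+1..N}. 1 - r / real j)"
proof -
  define M' where "M' j = (if 2 \<le> j then W_law r j else return borel 0)" for j :: nat
  have WJ: "W_joint r k N = PiM {k+1..N} M'"
    unfolding W_joint_def M'_def using k by (intro PiM_cong) auto
  interpret product_prob_space M'
  proof (unfold product_prob_space_def product_prob_space_axioms_def product_sigma_finite_def, safe)
    fix j
    show "prob_space (M' j)" unfolding M'_def
      using W_prob[OF _ r] by (auto intro: prob_space_return)
    then show "sigma_finite_measure (M' j)" by (rule prob_space_imp_sigma_finite)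
  qed
  have "(\<integral>w. Yprod k N w \<partial>(W_joint r k N)) = (\<integral>w. (\<Prod>j\<in>{k+1..N}. (\<lambda>j w. 1 - w) j (w j)) \<partial>PiM {k+1..N} M')"
    unfolding WJ Yprod_def by simp
  also have "\<dots> = (\<Prod>j\<in>{k+1..N}. integral\<^sup>L (M' j) (\<lambda>w. 1 - w))"
    by (rule product_integral_prod) (use k in \<open>auto simp: M'_def intro!: W_integrable[OF _ r]\<close>)
  also have "\<dots> = (\<Prod>j\<in>{k+1..N}. 1 - r / real j)"
    using k by (intro prod.cong) (auto simp: M'_def W_integral[OF _ r])
  finally show ?thesis .
qed


theorem lemma3p1:
  fixes r :: real and N k :: nat
  assumes "0 < r" "r < 1" "1 \<le> N" "1 \<le> k" "k \<le> N"
  shows "measure_pmf.expectation (yule_at r N) (Xfrac k)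
           = (\<integral>w. Yprod k N w \<partial>(W_joint r k N))
       \<and> (\<integral>w. Yprod k N w \<partial>(W_joint r k N))
           = (\<Prod>j\<in>{k+1..N}. 1 - r / real j)"
  using part1[of r N k] part2[of r k N] assms by simp

end
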